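(* Let $\Omega\subset\mathbb R^d$ be a bounded Borel set, $f:\Omega\to[0,\infty)$ bounded with $\int_\Omega f=1$, $p\ge1$, $x_1,x_2\in\Omega$, and $h_1,h_2:[0,1]\to[0,\infty)$ non-decreasing and Lipschitz continuous. Let $(\rho_j)_{j\ge1}$ be a sequence in $(0,1)$ with $\rho_j\to1$ and $\sum_{j\ge1}(1-\rho_j)=+\infty$. For any Borel $\psi_0:\Omega\to[0,1]$ define recursively: $m_j=\int_\Omega(1-\psi_j)f\,dx$, $t_{j+1}=h_2(1-m_j)-h_1(m_j)$, and $$\psi_{j+1}(x)=\begin{cases}\rho_j\,\psi_j(x)&\text{if }\tau(x)<t_{j+1},\\ 1-\rho_j(1-\psi_j(x))&\text{otherwise.}\end{cases}$$ Then $\psi_j\to\bar\psi$ uniformly on every compact subset of $\Omega\setminus\{\tau=\bar t\}$.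
   Context: $\tau(x)=|x-x_1|^p-|x-x_2|^p$, $m(t)=\int_{\{x\in\Omega:\tau(x)<t\}}f\,dx$, $G(t)=h_2(1-m(t))-h_1(m(t))$. There is a unique $\bar t$ with $G(\bar t)=\bar t$, and $\bar\psi(x)=0$ if $\tau(x)<\bar t$, $\bar\psi(x)=1$ if $\tau(x)>\bar t$ (the unique equilibrium). *)

theory Defs
  imports "HOL-Analysis.Analysis"
begin

definition tau :: "real \<Rightarrow> 'a::euclidean_space \<Rightarrow> 'a \<Rightarrow> 'a \<Rightarrow> real" where
  "tau p x1 x2 x = norm (x - x1) powr p - norm (x - x2) powr p"

definition mfun :: "'a::euclidean_space set \<Rightarrow> ('a \<Rightarrow> real) \<Rightarrow> real \<Rightarrow> 'a \<Rightarrow> 'a \<Rightarrow> real \<Rightarrow> real" where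
  "mfun \<Omega> f p x1 x2 t = (LINT x:{x\<in>\<Omega>. tau p x1 x2 x < t}|lebesgue. f x)"

definition Gfun :: "'a::euclidean_space set \<Rightarrow> ('a \<Rightarrow> real) \<Rightarrow> real \<Rightarrow> 'a \<Rightarrow> 'a
    \<Rightarrow> (real \<Rightarrow> real) \<Rightarrow> (real \<Rightarrow> real) \<Rightarrow> real \<Rightarrow> real" where
  "Gfun \<Omega> f p x1 x2 h1 h2 t = h2 (1 - mfun \<Omega> f p x1 x2 t) - h1 (mfun \<Omega> f p x1 x2 t)"

end

theory Submission imports Defs begin

lemma prod_small:
  fixes \<rho> :: "nat \<Rightarrow> real"
  assumes r: "\<forall>j. 0 < \<rho> j \<and> \<rho> j < 1" and d: "\<not> summable (\<lambda>j. 1 - \<rho> j)" and e: "\<epsilon> > 0"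
  shows "\<exists>K. \<forall>k\<ge>K. (\<Prod>i<k. \<rho> (N+i)) < \<epsilon>"
proof -
  define S where "S k = (\<Sum>i<k. 1 - \<rho> (N+i))" for k
  have dN: "\<not> summable (\<lambda>i. 1 - \<rho> (i + N))"
    using d summable_iff_shift[of "\<lambda>j. 1 - \<rho> j" N] by simp
  define B where "B = \<bar>ln \<epsilon>\<bar> + 1"
  have "\<exists>k. S k > B"
  proof (rule ccontr)
    assume "\<not> ?thesis"
    then have "\<And>k. (\<Sum>i<k. 1 - \<rho> (i+N)) \<le> B" by (simp add: S_def not_less add.commute)
    then have "summable (\<lambda>i. 1 - \<rho> (i + N))"
      by (intro summableI_nonneg_bounded[where x=B]) (use r in \<open>auto simp: less_imp_le\<close>)
    with dN show False by simp
  qed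
  then obtain K where K: "S K > B" by blast
  have mono: "S K \<le> S k" if "K \<le> k" for k
    unfolding S_def using that r by (intro sum_mono2) (auto simp: less_imp_le)
  have "(\<Prod>i<k. \<rho> (N+i)) < \<epsilon>" if "K \<le> k" for k
  proof -
    have "(\<Prod>i<k. \<rho> (N+i)) \<le> (\<Prod>i<k. exp (-(1 - \<rho> (N+i))))"
    proof (rule prod_mono)
      fix i show "0 \<le> \<rho> (N+i) \<and> \<rho> (N+i) \<le> exp (-(1 - \<rho> (N+i)))"
        using r exp_ge_add_one_self[of "\<rho> (N+i) - 1"] by (auto simp: less_imp_le)
    qed
    also have "\<dots> = exp (- S k)" by (simp add: S_def exp_sum[symmetric] sum_negf[symmetric])
    also have "\<dots> < exp (ln \<epsilon>)" using mono[OF that] K B_def by simp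
    also have "\<dots> = \<epsilon>" using e by simp
    finally show ?thesis .
  qed
  then show ?thesis by blast
qed

lemma abs_conv:
  fixes a u :: "nat \<Rightarrow> real"
  assumes a: "\<forall>j. 0 < a j \<and> a j < 1" and alim: "a \<longlonglongrightarrow> 0" and d: "\<not> summable a"
    and u0: "\<forall>j. 0 \<le> u j"
    and step: "\<forall>j. u (Suc j) \<le> max ((1 - a j) * u j) (a j)"
    and e: "\<epsilon> > 0"
  shows "\<exists>M. \<forall>j\<ge>M. u j < \<epsilon>"
proof -
  obtain N where N: "\<forall>j\<ge>N. a j < \<epsilon>"
    using alim e unfolding LIMSEQ_def by (auto simp: dist_real_def) (metis a abs_of_pos)
  define \<rho> where "\<rho> j = 1 - a j" for j
  have r: "\<forall>j. 0 < \<rho> j \<and> \<rho> j < 1" using a by (simp add: \<rho>_def)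
  have dr: "\<not> summable (\<lambda>j. 1 - \<rho> j)" using d by (simp add: \<rho>_def)
  have "\<exists>j\<ge>N. u j < \<epsilon>"
  proof (rule ccontr)
    assume H: "\<not> ?thesis"
    have bound: "u (N + k) \<le> u N * (\<Prod>i<k. \<rho> (N+i))" for k
    proof (induction k)
      case 0 then show ?case by simp
    next
      case (Suc k)
      have m: "u (N + Suc k) \<le> max ((1 - a (N+k)) * u (N+k)) (a (N+k))" using step by simp
      have "a (N+k) < \<epsilon>" "\<epsilon> \<le> u (N + Suc k)" using N H by (auto simp: not_less)
      then have "u (N + Suc k) \<le> (1 - a (N+k)) * u (N+k)" using m by linarith
      also have "\<dots> \<le> \<rho> (N+k) * (u N * (\<Prod>i<k. \<rho> (N+i)))"
        unfolding \<rho>_def[of "N+k"] using Suc.IH a[rule_format, of "N+k"] by (intro mult_left_mono) auto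
      finally show ?case by (simp add: mult.commute mult.left_commute)
    qed
    have "u N \<ge> \<epsilon>" using H by auto
    then have pos: "u N > 0" using e by simp
    obtain K where K: "\<forall>k\<ge>K. (\<Prod>i<k. \<rho> (N+i)) < \<epsilon> / u N"
      using prod_small[OF r dr, of "\<epsilon> / u N" N] pos e by auto
    have "u (N+K) < \<epsilon>"
    proof -
      have "u N * (\<Prod>i<K. \<rho> (N+i)) < u N * (\<epsilon> / u N)" using K pos by (intro mult_strict_left_mono) auto
      then show ?thesis using bound[of K] pos by simp
    qed
    with H show False by auto
  qed
  then obtain M where M: "M \<ge> N" "u M < \<epsilon>" by blast
  have "u (M + k) < \<epsilon>" for k
  proof (induction k)
    case 0 then show ?case using M by simp
  next
    case (Suc k)
    have "u (M + Suc k) \<le> max ((1 - a (M+k)) * u (M+k)) (a (M+k))" using step by simp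
    moreover have "(1 - a (M+k)) * u (M+k) < \<epsilon>"
    proof -
      have "(1 - a (M+k)) * u (M+k) \<le> u (M+k)" using a u0 by (intro mult_left_le_one_le) (auto simp: less_imp_le)
      then show ?thesis using Suc.IH by linarith
    qed
    moreover have "a (M+k) < \<epsilon>" using N M by auto
    ultimately show ?case by simp
  qed
  then show ?thesis by (metis le_add_diff_inverse)
qed

lemma aux1: "(0::real) \<le> P \<Longrightarrow> Q \<le> 0 \<Longrightarrow> -c \<le> Q \<Longrightarrow> \<bar>P+Q\<bar> \<le> max P c"
  by (auto simp: abs_if max_def)
lemma aux2: "(P::real) \<le> 0 \<Longrightarrow> 0 \<le> Q \<Longrightarrow> Q \<le> c \<Longrightarrow> \<bar>P+Q\<bar> \<le> max (-P) c"
  by (auto simp: abs_if max_def)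

theorem theorem5p7:
  fixes \<Omega> :: "'a::euclidean_space set" and f :: "'a \<Rightarrow> real"
    and p :: real and x1 x2 :: 'a
    and h1 h2 :: "real \<Rightarrow> real" and L1 L2 :: real
    and \<rho> :: "nat \<Rightarrow> real" and \<psi> :: "nat \<Rightarrow> 'a \<Rightarrow> real" and tbar :: real
  assumes \<Omega>_borel: "\<Omega> \<in> sets borel" and \<Omega>_bdd: "bounded \<Omega>"
    and f_nonneg: "\<forall>x\<in>\<Omega>. f x \<ge> 0"
    and f_bdd: "\<exists>B. \<forall>x\<in>\<Omega>. f x \<le> B"
    and f_int: "set_integrable lebesgue \<Omega> f"
    and f_one: "(LINT x:\<Omega>|lebesgue. f x) = 1"
    and p: "p \<ge> 1"
    and x1: "x1 \<in> \<Omega>" and x2: "x2 \<in> \<Omega>"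
    and h1_nonneg: "\<forall>s\<in>{0..1}. h1 s \<ge> 0" and h2_nonneg: "\<forall>s\<in>{0..1}. h2 s \<ge> 0"
    and h1_mono: "mono_on {0..1} h1" and h2_mono: "mono_on {0..1} h2"
    and h1_lip: "L1-lipschitz_on {0..1} h1" and h2_lip: "L2-lipschitz_on {0..1} h2"
    and \<rho>_range: "\<forall>j. 0 < \<rho> j \<and> \<rho> j < 1"
    and \<rho>_lim: "\<rho> \<longlonglongrightarrow> 1"
    and \<rho>_div: "\<not> summable (\<lambda>j. 1 - \<rho> j)"
    and \<psi>0_meas: "set_borel_measurable borel \<Omega> (\<psi> 0)"
    and \<psi>0_range: "\<forall>x\<in>\<Omega>. 0 \<le> \<psi> 0 x \<and> \<psi> 0 x \<le> 1"
    and \<psi>_rec: "\<forall>j. \<forall>x\<in>\<Omega>. \<psi> (Suc j) x =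
        (let m = (LINT y:\<Omega>|lebesgue. (1 - \<psi> j y) * f y);
             t = h2 (1 - m) - h1 m
         in if tau p x1 x2 x < t then \<rho> j * \<psi> j x else 1 - \<rho> j * (1 - \<psi> j x))"
    and tbar: "Gfun \<Omega> f p x1 x2 h1 h2 tbar = tbar"
  shows "\<forall>K. compact K \<and> K \<subseteq> \<Omega> - {x. tau p x1 x2 x = tbar} \<longrightarrow>
           uniform_limit K \<psi> (\<lambda>x. if tau p x1 x2 x < tbar then 0 else 1) sequentially"
proof (intro allI impI)
  fix K assume K: "compact K \<and> K \<subseteq> \<Omega> - {x. tau p x1 x2 x = tbar}"
  define T where "T = tau p x1 x2"
  have Tcont: "continuous_on UNIV T"
  proof -
    have c1: "continuous_on UNIV (\<lambda>x. norm (x - x1) powr p)"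
      using p by (intro continuous_on_powr') (auto intro!: continuous_intros)
    have c2: "continuous_on UNIV (\<lambda>x. norm (x - x2) powr p)"
      using p by (intro continuous_on_powr') (auto intro!: continuous_intros)
    show ?thesis unfolding T_def tau_def[abs_def] using c1 c2 by (intro continuous_on_diff)
  qed
  have Tmeas[measurable]: "T \<in> borel_measurable borel" using borel_measurable_continuous_onI[OF Tcont] .
  have \<Omega>meas[measurable]: "\<Omega> \<in> sets borel" by (fact \<Omega>_borel)
  define A where "A t = {x\<in>\<Omega>. T x < t}" for t
  have Aborel: "A t \<in> sets borel" for t
  proof -
    have "open {x. T x < t}" by (rule open_Collect_less[OF Tcont]) (intro continuous_intros)
    then have "{x. T x < t} \<in> sets borel" by auto
    then show ?thesis unfolding A_def using \<Omega>_borel by (metis (no_types) Collect_conj_eq Collect_mem_eq sets.Int)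
  qed
  have Aleb: "A t \<in> sets lebesgue" for t
    using Aborel[of t] by (simp add: sets_completionI_sets)
  define mj where "mj j = (LINT y:\<Omega>|lebesgue. (1 - \<psi> j y) * f y)" for j
  define H where "H m = h2 (1 - m) - h1 m" for m
  define MF where "MF t = mfun \<Omega> f p x1 x2 t" for t
  have rec: "\<forall>x\<in>\<Omega>. \<psi> (Suc j) x = (if T x < H (mj j) then \<rho> j * \<psi> j x else 1 - \<rho> j * (1 - \<psi> j x))" for j
    using \<psi>_rec by (simp add: Let_def H_def mj_def T_def)
  have psi: "(\<forall>x\<in>\<Omega>. 0 \<le> \<psi> j x \<and> \<psi> j x \<le> 1) \<and> (\<lambda>x. indicator \<Omega> x * \<psi> j x) \<in> borel_measurable borel" for j
  proof (induction j)
    case 0 show ?case using \<psi>0_range \<psi>0_meas by (simp add: set_borel_measurable_def)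
  next
    case (Suc j)
    define t where "t = H (mj j)"
    have r: "0 < \<rho> j" "\<rho> j < 1" using \<rho>_range by auto
    have range: "\<forall>x\<in>\<Omega>. 0 \<le> \<psi> (Suc j) x \<and> \<psi> (Suc j) x \<le> 1"
    proof
      fix x assume x: "x\<in>\<Omega>"
      then have a: "0 \<le> \<psi> j x" "\<psi> j x \<le> 1" using Suc.IH by auto
      have "0 \<le> \<rho> j * \<psi> j x" "\<rho> j * \<psi> j x \<le> 1" "0 \<le> \<rho> j*(1-\<psi> j x)" "\<rho> j*(1-\<psi> j x) \<le> 1"
        using a r by (auto intro: mult_le_one)
      then show "0 \<le> \<psi> (Suc j) x \<and> \<psi> (Suc j) x \<le> 1" using rec[of j] x by auto
    qed
    have eq: "(\<lambda>x. indicator \<Omega> x * \<psi> (Suc j) x) = (\<lambda>x. if T x < t then \<rho> j * (indicator \<Omega> x * \<psi> j x)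
        else indicator \<Omega> x - \<rho> j * (indicator \<Omega> x - indicator \<Omega> x * \<psi> j x))"
      using rec[of j] by (auto simp: indicator_def fun_eq_iff t_def)
    have m1[measurable]: "(\<lambda>x. indicator \<Omega> x * \<psi> j x) \<in> borel_measurable borel" using Suc.IH by simp
    have "(\<lambda>x. if T x < t then \<rho> j * (indicator \<Omega> x * \<psi> j x)
        else indicator \<Omega> x - \<rho> j * (indicator \<Omega> x - indicator \<Omega> x * \<psi> j x)) \<in> borel_measurable borel"
      by measurable
    then show ?case using range eq by simp
  qed
  have fint: "integrable lebesgue (\<lambda>x. indicator \<Omega> x * f x)" using f_int by (simp add: set_integrable_def)
  have fmeas: "(\<lambda>x. indicator \<Omega> x * f x) \<in> borel_measurable lebesgue" using fint by auto
  have psileb: "(\<lambda>x. indicator \<Omega> x * \<psi> j x) \<in> borel_measurable lebesgue" for j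
    using psi[of j] by (intro measurable_completion) simp
  have int1: "integrable lebesgue (\<lambda>x. indicator \<Omega> x * ((1 - \<psi> j x) * f x))" for j
  proof (rule Bochner_Integration.integrable_bound[OF fint])
    have "(\<lambda>x. indicator \<Omega> x * ((1 - \<psi> j x) * f x)) = (\<lambda>x. (indicator \<Omega> x * f x) - (indicator \<Omega> x * \<psi> j x) * (indicator \<Omega> x * f x))"
      by (auto simp: indicator_def fun_eq_iff algebra_simps)
    then show "(\<lambda>x. indicator \<Omega> x * ((1 - \<psi> j x) * f x)) \<in> borel_measurable lebesgue"
      using fmeas psileb[of j] by (simp add: borel_measurable_diff borel_measurable_times)
    show "AE x in lebesgue. norm (indicator \<Omega> x * ((1 - \<psi> j x) * f x)) \<le> norm (indicator \<Omega> x * f x)"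
    proof (intro AE_I2)
      fix x show "norm (indicator \<Omega> x * ((1 - \<psi> j x) * f x)) \<le> norm (indicator \<Omega> x * f x)"
      proof (cases "x \<in> \<Omega>")
        case True
        then have "0 \<le> 1 - \<psi> j x" "1 - \<psi> j x \<le> 1" "0 \<le> f x" using psi[of j] f_nonneg by auto
        then have "(1 - \<psi> j x) * f x \<le> f x" "0 \<le> (1 - \<psi> j x) * f x" by (auto intro: mult_left_le_one_le)
        then show ?thesis using True \<open>0 \<le> f x\<close> by simp
      qed simp
    qed
  qed
  have int2: "integrable lebesgue (\<lambda>x. indicator (A t) x * f x)" for t
    using set_integrable_subset[OF f_int Aleb[of t]] by (auto simp: A_def set_integrable_def)
  have MFeq: "MF t = integral\<^sup>L lebesgue (\<lambda>x. indicator (A t) x * f x)" for t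
    by (simp add: MF_def mfun_def set_lebesgue_integral_def A_def T_def)
  have mjeq: "mj j = integral\<^sup>L lebesgue (\<lambda>x. indicator \<Omega> x * ((1 - \<psi> j x) * f x))" for j
    by (simp add: mj_def set_lebesgue_integral_def)
  have one: "integral\<^sup>L lebesgue (\<lambda>x. indicator \<Omega> x * f x) = 1"
    using f_one by (simp add: set_lebesgue_integral_def)
  have MFrange: "0 \<le> MF t \<and> MF t \<le> 1" for t
  proof
    show "0 \<le> MF t" unfolding MFeq using f_nonneg by (intro Bochner_Integration.integral_nonneg) (auto simp: indicator_def A_def)
    have "MF t \<le> integral\<^sup>L lebesgue (\<lambda>x. indicator \<Omega> x * f x)"
      unfolding MFeq using f_nonneg by (intro integral_mono[OF int2 fint]) (auto simp: indicator_def A_def)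
    then show "MF t \<le> 1" using one by simp
  qed
  have MFmono: "MF s \<le> MF t" if "s \<le> t" for s t
    unfolding MFeq using f_nonneg that by (intro integral_mono[OF int2 int2]) (auto simp: indicator_def A_def)
  have mjrange: "0 \<le> mj j \<and> mj j \<le> 1" for j
  proof
    show "0 \<le> mj j" unfolding mjeq using f_nonneg psi[of j] by (intro Bochner_Integration.integral_nonneg) (auto simp: indicator_def)
    have "mj j \<le> integral\<^sup>L lebesgue (\<lambda>x. indicator \<Omega> x * f x)"
      unfolding mjeq
    proof (intro integral_mono[OF int1 fint])
      fix x show "indicator \<Omega> x * ((1 - \<psi> j x) * f x) \<le> indicator \<Omega> x * f x"
      proof (cases "x \<in> \<Omega>")
        case True
        then have "0 \<le> 1 - \<psi> j x" "1 - \<psi> j x \<le> 1" "0 \<le> f x" using psi[of j] f_nonneg by auto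
        then have "(1 - \<psi> j x) * f x \<le> f x" by (auto intro: mult_left_le_one_le)
        then show ?thesis using True by simp
      qed simp
    qed
    then show "mj j \<le> 1" using one by simp
  qed
  have mjrec: "mj (Suc j) = \<rho> j * mj j + (1 - \<rho> j) * MF (H (mj j))" for j
  proof -
    define tj where "tj = H (mj j)"
    have eqf: "(\<lambda>x. indicator \<Omega> x * ((1 - \<psi> (Suc j) x) * f x)) =
      (\<lambda>x. \<rho> j * (indicator \<Omega> x * ((1 - \<psi> j x) * f x)) + (1 - \<rho> j) * (indicator (A tj) x * f x))"
      using rec[of j] by (auto simp: fun_eq_iff indicator_def A_def algebra_simps tj_def)
    have "mj (Suc j) = integral\<^sup>L lebesgue (\<lambda>x. \<rho> j * (indicator \<Omega> x * ((1 - \<psi> j x) * f x)) + (1 - \<rho> j) * (indicator (A tj) x * f x))"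
      by (simp only: mjeq eqf)
    also have "\<dots> = \<rho> j * integral\<^sup>L lebesgue (\<lambda>x. indicator \<Omega> x * ((1 - \<psi> j x) * f x)) + (1 - \<rho> j) * integral\<^sup>L lebesgue (\<lambda>x. indicator (A tj) x * f x)"
      using int1[of j] int2[of tj] by simp
    also have "\<dots> = \<rho> j * mj j + (1 - \<rho> j) * MF tj" by (simp only: mjeq MFeq)
    finally show ?thesis by (simp add: tj_def)
  qed
  define mbar where "mbar = MF tbar"
  have Hbar: "H mbar = tbar" using tbar by (simp add: Gfun_def H_def mbar_def MF_def)
  have Hanti: "H m \<le> H m'" if "m' \<le> m" "0 \<le> m'" "m \<le> 1" for m m'
  proof -
    have "h2 (1 - m) \<le> h2 (1 - m')" using that by (intro mono_onD[OF h2_mono]) auto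
    moreover have "h1 m' \<le> h1 m" using that by (intro mono_onD[OF h1_mono]) auto
    ultimately show ?thesis by (simp add: H_def)
  qed
  define a where "a j = 1 - \<rho> j" for j
  define u where "u j = \<bar>mj j - mbar\<bar>" for j
  have step: "\<forall>j. u (Suc j) \<le> max ((1 - a j) * u j) (a j)"
  proof
    fix j
    have r: "0 < \<rho> j" "\<rho> j < 1" using \<rho>_range by auto
    let ?m = "mj j" let ?F = "MF (H (mj j))"
    have e: "mj (Suc j) - mbar = \<rho> j * (?m - mbar) + (1 - \<rho> j) * (?F - mbar)"
      using mjrec[of j] by (simp add: algebra_simps)
    have mb: "0 \<le> mbar" "mbar \<le> 1" using MFrange by (auto simp: mbar_def)
    have F: "0 \<le> ?F" "?F \<le> 1" using MFrange by auto
    show "u (Suc j) \<le> max ((1 - a j) * u j) (a j)"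
    proof (cases "?m \<ge> mbar")
      case True
      have "H ?m \<le> tbar" using Hanti[OF True mb(1)] mjrange[of j] Hbar by simp
      then have "?F \<le> mbar" unfolding mbar_def by (rule MFmono)
      then have "(1 - \<rho> j) * (?F - mbar) \<le> 0" using r by (intro mult_nonneg_nonpos) auto
      moreover have "(1 - \<rho> j) * (-1) \<le> (1 - \<rho> j) * (?F - mbar)"
        using r F mb by (intro mult_left_mono) auto
      moreover have "0 \<le> \<rho> j * (?m - mbar)" using r True by simp
      ultimately have "\<bar>\<rho> j * (?m - mbar) + (1 - \<rho> j) * (?F - mbar)\<bar> \<le> max (\<rho> j * (?m - mbar)) (1 - \<rho> j)"
        by (intro aux1) auto
      moreover have "(1 - a j) * u j = \<rho> j * (?m - mbar)" using True r by (simp add: a_def u_def)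
      moreover have "u (Suc j) = \<bar>\<rho> j * (?m - mbar) + (1 - \<rho> j) * (?F - mbar)\<bar>" using e by (simp add: u_def)
      moreover have "a j = 1 - \<rho> j" by (simp add: a_def)
      ultimately show ?thesis by metis
    next
      case False
      have "H mbar \<le> H ?m" using False mb(2) mjrange[of j] by (intro Hanti) auto
      then have "tbar \<le> H ?m" using Hbar by simp
      then have "mbar \<le> ?F" unfolding mbar_def by (rule MFmono)
      then have "(1 - \<rho> j) * (?F - mbar) \<ge> 0" using r by simp
      moreover have "(1 - \<rho> j) * (?F - mbar) \<le> (1 - \<rho> j) * 1"
        using r F mb by (intro mult_left_mono) auto
      moreover have "\<rho> j * (?m - mbar) \<le> 0" using r False by (simp add: mult_nonneg_nonpos)
      ultimately have "\<bar>\<rho> j * (?m - mbar) + (1 - \<rho> j) * (?F - mbar)\<bar> \<le> max (- (\<rho> j * (?m - mbar))) (1 - \<rho> j)"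
        by (intro aux2) auto
      moreover have "(1 - a j) * u j = - (\<rho> j * (?m - mbar))" using False r by (simp add: a_def u_def algebra_simps)
      moreover have "u (Suc j) = \<bar>\<rho> j * (?m - mbar) + (1 - \<rho> j) * (?F - mbar)\<bar>" using e by (simp add: u_def)
      moreover have "a j = 1 - \<rho> j" by (simp add: a_def)
      ultimately show ?thesis by metis
    qed
  qed
  have arange: "\<forall>j. 0 < a j \<and> a j < 1" using \<rho>_range by (simp add: a_def)
  have alim: "a \<longlonglongrightarrow> 0"
  proof -
    have "(\<lambda>j. 1 - \<rho> j) \<longlonglongrightarrow> 1 - 1" by (intro tendsto_intros \<rho>_lim)
    then show ?thesis by (simp add: a_def[abs_def])
  qed
  have adiv: "\<not> summable a" using \<rho>_div by (simp add: a_def[abs_def])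
  have uconv: "\<exists>M. \<forall>j\<ge>M. u j < \<epsilon>" if "\<epsilon> > 0" for \<epsilon>
    by (rule abs_conv[OF arange alim adiv _ step that]) (simp add: u_def)
  have L: "0 \<le> L1" "0 \<le> L2" using lipschitz_on_nonneg h1_lip h2_lip by auto
  have Hlip: "\<bar>H (mj j) - tbar\<bar> \<le> (L1 + L2) * u j" for j
  proof -
    have mb: "0 \<le> mbar" "mbar \<le> 1" using MFrange by (auto simp: mbar_def)
    have "dist (h2 (1 - mj j)) (h2 (1 - mbar)) \<le> L2 * dist (1 - mj j) (1 - mbar)"
      using mjrange[of j] mb by (intro lipschitz_onD[OF h2_lip]) auto
    moreover have "dist (h1 (mj j)) (h1 mbar) \<le> L1 * dist (mj j) mbar"
      using mjrange[of j] mb by (intro lipschitz_onD[OF h1_lip]) auto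
    ultimately show ?thesis unfolding Hbar[symmetric]
      by (simp add: H_def u_def dist_real_def algebra_simps abs_minus_commute)
  qed
  have goal: "uniform_limit K \<psi> (\<lambda>x. if T x < tbar then 0 else 1) sequentially"
  proof (cases "K = {}")
    case True then show ?thesis by (simp add: uniform_limit_iff)
  next
    case False
    have cK: "continuous_on K (\<lambda>x. \<bar>T x - tbar\<bar>)"
      by (intro continuous_intros continuous_on_subset[OF Tcont]) auto
    obtain x0 where x0: "x0 \<in> K" "\<forall>y\<in>K. \<bar>T x0 - tbar\<bar> \<le> \<bar>T y - tbar\<bar>"
      using continuous_attains_inf[OF _ False cK] K by blast
    define \<delta> where "\<delta> = \<bar>T x0 - tbar\<bar>"
    have \<delta>pos: "\<delta> > 0" using x0 K by (auto simp: \<delta>_def T_def)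
    have \<delta>le: "\<delta> \<le> \<bar>T y - tbar\<bar>" if "y \<in> K" for y using x0 that by (simp add: \<delta>_def)
    obtain M where M: "\<forall>j\<ge>M. u j < \<delta> / (L1 + L2 + 1)"
      using uconv[of "\<delta> / (L1 + L2 + 1)"] \<delta>pos L by auto
    have tM: "\<bar>H (mj j) - tbar\<bar> < \<delta>" if "j \<ge> M" for j
    proof -
      have u0: "0 \<le> u j" by (simp add: u_def)
      have "(L1 + L2) * u j \<le> (L1 + L2 + 1) * u j" using u0 by (simp add: mult_right_mono)
      also have "\<dots> < (L1 + L2 + 1) * (\<delta> / (L1 + L2 + 1))"
        using M that L by (intro mult_strict_left_mono) auto
      also have "\<dots> = \<delta>" using L by simp
      finally show ?thesis using Hlip[of j] by linarith
    qed
    have KO: "K \<subseteq> \<Omega>" using K by auto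
    have below: "\<psi> (M + k) x \<le> (\<Prod>i<k. \<rho> (M+i))" if "x \<in> K" "T x < tbar" for x k
    proof (induction k)
      case 0 show ?case using psi[of M] KO that by auto
    next
      case (Suc k)
      have "T x < H (mj (M+k))" using tM[of "M+k"] \<delta>le[OF that(1)] that(2) by auto
      then have "\<psi> (M + Suc k) x = \<rho> (M+k) * \<psi> (M+k) x" using rec[of "M+k"] KO that by auto
      also have "\<dots> \<le> \<rho> (M+k) * (\<Prod>i<k. \<rho> (M+i))"
        using Suc.IH \<rho>_range by (intro mult_left_mono) (auto simp: less_imp_le)
      finally show ?case by (simp add: mult.commute)
    qed
    have above: "1 - \<psi> (M + k) x \<le> (\<Prod>i<k. \<rho> (M+i))" if "x \<in> K" "\<not> T x < tbar" for x k
    proof (induction k)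
      case 0 show ?case using psi[of M] KO that by auto
    next
      case (Suc k)
      have "T x \<noteq> tbar" using that K by (auto simp: T_def)
      then have "\<not> T x < H (mj (M+k))" using tM[of "M+k"] \<delta>le[OF that(1)] that(2) by auto
      then have "1 - \<psi> (M + Suc k) x = \<rho> (M+k) * (1 - \<psi> (M+k) x)" using rec[of "M+k"] KO that by auto
      also have "\<dots> \<le> \<rho> (M+k) * (\<Prod>i<k. \<rho> (M+i))"
        using Suc.IH \<rho>_range by (intro mult_left_mono) (auto simp: less_imp_le)
      finally show ?case by (simp add: mult.commute)
    qed
    show ?thesis
    proof (unfold uniform_limit_iff, intro allI impI)
      fix \<epsilon> :: real assume e: "\<epsilon> > 0"
      obtain Kk where Kk: "\<forall>k\<ge>Kk. (\<Prod>i<k. \<rho> (M+i)) < \<epsilon>"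
        using prod_small[OF \<rho>_range \<rho>_div e] by blast
      show "\<forall>\<^sub>F n in sequentially. \<forall>x\<in>K. dist (\<psi> n x) (if T x < tbar then 0 else 1) < \<epsilon>"
        unfolding eventually_sequentially
      proof (intro exI[of _ "M + Kk"] allI impI ballI)
        fix n x assume n: "M + Kk \<le> n" and x: "x \<in> K"
        obtain k where k: "n = M + k" "Kk \<le> k" using n by (metis add_leE le_add_diff_inverse nat_add_left_cancel_le)
        have pk: "(\<Prod>i<k. \<rho> (M+i)) < \<epsilon>" using Kk k by auto
        have r01: "0 \<le> \<psi> n x \<and> \<psi> n x \<le> 1" using psi[of n] x KO by auto
        show "dist (\<psi> n x) (if T x < tbar then 0 else 1) < \<epsilon>"
        proof (cases "T x < tbar")
          case True then show ?thesis using below[OF x True, of k] k pk r01 by (simp add: dist_real_def)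
        next
          case False then show ?thesis using above[OF x False, of k] k pk r01 by (simp add: dist_real_def)
        qed
      qed
    qed
  qed
  then show "uniform_limit K \<psi> (\<lambda>x. if tau p x1 x2 x < tbar then 0 else 1) sequentially"
    by (simp add: T_def)
qed

end
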